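(* Let $d\ge2$, $i\in\{1,\dots,d\}$, $\widetilde x\in\mathbb{R}^{d-1}$, $y\in\mathbb{R}$ and $x = (\widetilde{x}_1,\dots,\widetilde{x}_{i-1},y,\widetilde{x}_i,\dots,\widetilde{x}_{d-1})^\top\in\mathbb{R}^d$. For $\theta\in\{\pm1\}^d$ write $\theta_{-i} := (\theta_1,\dots,\theta_{i-1},\theta_{i+1},\dots,\theta_d)^\top$. Then: 1. If $(\theta,p)=\mathrm{csa}_{\text{even}}(x)$ and $\theta_i = 1$, then $\mathrm{csa}_{\text{odd}}(\widetilde x) = (\theta_{-i}, p-1)$. 2. If $(\theta,p)=\mathrm{csa}_{\text{odd}}(x)$ and $\theta_i = 1$, then $\mathrm{csa}_{\text{even}}(\widetilde x) = (\theta_{-i}, p-1)$. 3. If $(\theta,p)=\mathrm{csa}_{\text{even}}(x)$ and $\theta_i = -1$, then $\mathrm{csa}_{\text{even}}(\widetilde x) = (\theta_{-i}, p)$. 4. If $(\theta,p)=\mathrm{csa}_{\text{odd}}(x)$ and $\theta_i = -1$, then $\mathrm{csa}_{\text{odd}}(\widetilde x) = (\theta_{-i}, p)$.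
   Context: Cut-search procedures: for $u\in\mathbb{R}^k$, $\mathrm{csa}_{\text{even}}(u)$ is computed as follows: set $\theta_j = 1$ if $u_j>1/2$ and $\theta_j=-1$ otherwise ($j=1,\dots,k$); if $|\{j:\theta_j=1\}|$ is even, let $j^*$ be the smallest index in $\arg\min_j |u_j - 1/2|$ and replace $\theta_{j^*}$ by $-\theta_{j^*}$; finally set $p = |\{j:\theta_j = 1\}| - 1$ and output $(\theta,p)$. $\mathrm{csa}_{\text{odd}}(u)$ is identical except that the flip is performed when $|\{j:\theta_j=1\}|$ is odd. (These output the only potentially violated forbidden-set inequality $\theta^\top w\le p$ of $\operatorname{conv}\{w\in\{0,1\}^k:\sum w_j \text{ even}\}$, respectively of its odd counterpart, at $\Pi_{[0,1]^k}(u)$.) *)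

theory Defs
  imports Main Complex_Main
begin

text \<open>Vectors in R^k are represented as lists of length k (0-based indices).
  Sign vectors theta in {-1,1}^k are int lists.\<close>

definition csa_signs :: "real list \<Rightarrow> int list" where
  "csa_signs u = map (\<lambda>t. if t > 1/2 then 1 else -1) u"

definition num_ones :: "int list \<Rightarrow> nat" where
  "num_ones \<theta> = card {j. j < length \<theta> \<and> \<theta> ! j = 1}"

definition csa_jstar :: "real list \<Rightarrow> nat" where
  "csa_jstar u = (LEAST j. j < length u \<and>
      (\<forall>k < length u. \<bar>u ! j - 1/2\<bar> \<le> \<bar>u ! k - 1/2\<bar>))"

definition csa_flip :: "real list \<Rightarrow> int list" where
  "csa_flip u = (let \<theta> = csa_signs u; j = csa_jstar u in \<theta>[j := - (\<theta> ! j)])"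

definition csa_even :: "real list \<Rightarrow> int list \<times> int" where
  "csa_even u = (let \<theta> = (if even (num_ones (csa_signs u)) then csa_flip u else csa_signs u)
                 in (\<theta>, int (num_ones \<theta>) - 1))"

definition csa_odd :: "real list \<Rightarrow> int list \<times> int" where
  "csa_odd u = (let \<theta> = (if odd (num_ones (csa_signs u)) then csa_flip u else csa_signs u)
                 in (\<theta>, int (num_ones \<theta>) - 1))"

definition drop_idx :: "nat \<Rightarrow> 'a list \<Rightarrow> 'a list" where
  "drop_idx i xs = take i xs @ drop (Suc i) xs"

definition ins_idx :: "nat \<Rightarrow> 'a \<Rightarrow> 'a list \<Rightarrow> 'a list" where
  "ins_idx i y xs = take i xs @ [y] @ drop i xs"

end

theory Submission
  imports Defs
begin

lemma len_ins[simp]: "i \<le> length l \<Longrightarrow> length (ins_idx i y l) = Suc (length l)"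
  unfolding ins_idx_def by simp

lemma nth_ins: "i \<le> length l \<Longrightarrow> k < Suc (length l) \<Longrightarrow>
  ins_idx i y l ! k = (if k < i then l ! k else if k = i then y else l ! (k - 1))"
  unfolding ins_idx_def
  by (auto simp: nth_append min_def nth_Cons' )

lemma map_ins: "map f (ins_idx i y l) = ins_idx i (f y) (map f l)"
  unfolding ins_idx_def by (simp add: take_map drop_map)

lemma drop_ins: "i \<le> length l \<Longrightarrow> drop_idx i (ins_idx i y l) = l"
  unfolding ins_idx_def drop_idx_def by simp

lemma num_ones_filter: "num_ones t = length (filter (\<lambda>a. a = 1) t)"
  unfolding num_ones_def by (simp add: length_filter_conv_card)

lemma num_ones_ins: "num_ones (ins_idx i a l) = num_ones l + (if a = 1 then 1 else 0)"
proof -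
  have "num_ones l = length (filter (\<lambda>a. a = 1) (take i l @ drop i l))"
    by (simp add: num_ones_filter)
  also have "\<dots> = length (filter (\<lambda>a. a = 1) (take i l)) + length (filter (\<lambda>a. a = 1) (drop i l))"
    by (metis filter_append length_append)
  finally show ?thesis unfolding num_ones_filter ins_idx_def by simp
qed

lemma ins_upd: "i \<le> length l \<Longrightarrow> J < Suc (length l) \<Longrightarrow> J \<noteq> i \<Longrightarrow>
  (ins_idx i a l)[J := v] = ins_idx i a (l[(if J < i then J else J - 1) := v])"
  by (rule nth_equalityI) (auto simp: nth_ins nth_list_update)

lemma jstar_char:
  assumes "j < length u" "\<forall>k<length u. \<bar>u ! j - 1/2\<bar> \<le> \<bar>u ! k - 1/2\<bar>"
    "\<forall>k<j. \<bar>u ! j - 1/2\<bar> < \<bar>u ! k - 1/2\<bar>"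
  shows "csa_jstar u = j"
  unfolding csa_jstar_def
proof (rule Least_equality)
  show "j < length u \<and> (\<forall>k<length u. \<bar>u ! j - 1 / 2\<bar> \<le> \<bar>u ! k - 1 / 2\<bar>)" using assms by auto
next
  fix m assume m: "m < length u \<and> (\<forall>k<length u. \<bar>u ! m - 1 / 2\<bar> \<le> \<bar>u ! k - 1 / 2\<bar>)"
  show "j \<le> m"
  proof (rule ccontr)
    assume "\<not> j \<le> m"
    then have "m < j" by simp
    with assms(3) have "\<bar>u ! j - 1/2\<bar> < \<bar>u ! m - 1/2\<bar>" by auto
    moreover have "\<bar>u ! m - 1/2\<bar> \<le> \<bar>u ! j - 1/2\<bar>" using m assms(1) by auto
    ultimately show False by simp
  qed
qed

lemma jstar_props:
  assumes "u \<noteq> []"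
  shows "csa_jstar u < length u" "\<forall>k<length u. \<bar>u ! csa_jstar u - 1/2\<bar> \<le> \<bar>u ! k - 1/2\<bar>"
    "\<forall>k<csa_jstar u. \<bar>u ! csa_jstar u - 1/2\<bar> < \<bar>u ! k - 1/2\<bar>"
proof -
  let ?P = "\<lambda>j. j < length u \<and> (\<forall>k < length u. \<bar>u ! j - 1/2\<bar> \<le> \<bar>u ! k - 1/2\<bar>)"
  have fin: "finite ((\<lambda>k. \<bar>u ! k - 1/2\<bar>) ` {..<length u})" by simp
  have ne: "(\<lambda>k. \<bar>u ! k - 1/2\<bar>) ` {..<length u} \<noteq> {}" using assms by (simp add: lessThan_empty_iff)
  obtain j where j: "j < length u" "\<bar>u ! j - 1/2\<bar> = Min ((\<lambda>k. \<bar>u ! k - 1/2\<bar>) ` {..<length u})"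
    using Min_in[OF fin ne] by auto
  have "?P j" using j Min_le[OF fin] by auto
  then have P: "?P (csa_jstar u)" unfolding csa_jstar_def by (rule LeastI)
  then show "csa_jstar u < length u" "\<forall>k<length u. \<bar>u ! csa_jstar u - 1/2\<bar> \<le> \<bar>u ! k - 1/2\<bar>"
    by auto
  show "\<forall>k<csa_jstar u. \<bar>u ! csa_jstar u - 1/2\<bar> < \<bar>u ! k - 1/2\<bar>"
  proof (intro allI impI)
    fix k assume k: "k < csa_jstar u"
    then have "\<not> ?P k" unfolding csa_jstar_def by (rule not_less_Least)
    moreover have "k < length u" using k P by auto
    ultimately have "\<bar>u ! k - 1/2\<bar> \<noteq> \<bar>u ! csa_jstar u - 1/2\<bar>" using P by auto
    then show "\<bar>u ! csa_jstar u - 1/2\<bar> < \<bar>u ! k - 1/2\<bar>" using P \<open>k < length u\<close> by force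
  qed
qed

lemma jstar_ins:
  assumes "i \<le> length l" "l \<noteq> []" "csa_jstar (ins_idx i y l) \<noteq> i"
  shows "csa_jstar l = (if csa_jstar (ins_idx i y l) < i then csa_jstar (ins_idx i y l)
            else csa_jstar (ins_idx i y l) - 1)"
proof -
  let ?x = "ins_idx i y l"
  let ?J = "csa_jstar ?x"
  let ?j = "if ?J < i then ?J else ?J - 1"
  have xne: "?x \<noteq> []" using assms(1) by (metis len_ins list.size(3) nat.distinct(1))
  note P = jstar_props[OF xne]
  have J: "?J < Suc (length l)" using P(1) assms(1) by simp
  have jl: "?j < length l" using J assms by auto
  have xj: "l ! ?j = ?x ! ?J" using J assms by (auto simp: nth_ins)
  have sh: "?x ! (if k < i then k else Suc k) = l ! k" if "k < length l" for k
    using that assms(1) by (auto simp: nth_ins)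
  show ?thesis
  proof (rule jstar_char)
    show "?j < length l" by fact
    show "\<forall>k<length l. \<bar>l ! ?j - 1 / 2\<bar> \<le> \<bar>l ! k - 1 / 2\<bar>"
    proof (intro allI impI)
      fix k assume k: "k < length l"
      have "(if k < i then k else Suc k) < length ?x" using k assms(1) by auto
      then show "\<bar>l ! ?j - 1 / 2\<bar> \<le> \<bar>l ! k - 1 / 2\<bar>" using P(2) xj sh[OF k] by metis
    qed
    show "\<forall>k<?j. \<bar>l ! ?j - 1 / 2\<bar> < \<bar>l ! k - 1 / 2\<bar>"
    proof (intro allI impI)
      fix k assume k: "k < ?j"
      have "(if k < i then k else Suc k) < ?J" using k assms(3) by (cases "?J < i") auto
      then show "\<bar>l ! ?j - 1 / 2\<bar> < \<bar>l ! k - 1 / 2\<bar>" using P(3) xj sh k jl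
        by (metis less_trans)
    qed
  qed
qed

lemma drop_upd_same: "drop_idx i (l[i := v]) = drop_idx i l"
  unfolding drop_idx_def by simp

definition gen :: "bool \<Rightarrow> real list \<Rightarrow> int list" where
  "gen c u = (if (even (num_ones (csa_signs u)) = c) then csa_flip u else csa_signs u)"

lemma even_gen: "csa_even u = (gen True u, int (num_ones (gen True u)) - 1)"
  unfolding csa_even_def gen_def by (simp add: Let_def)

lemma odd_gen: "csa_odd u = (gen False u, int (num_ones (gen False u)) - 1)"
  unfolding csa_odd_def gen_def by (simp add: Let_def)

lemma ins_drop: "i < length t \<Longrightarrow> ins_idx i (t ! i) (drop_idx i t) = t"
  unfolding ins_idx_def drop_idx_def by (simp add: min_def id_take_nth_drop[symmetric])

lemma num_ones_drop: "i < length t \<Longrightarrow>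
   num_ones t = num_ones (drop_idx i t) + (if t ! i = 1 then 1 else 0)"
  by (metis ins_drop num_ones_ins)

lemma key:
  assumes il: "i \<le> length l" and ne: "l \<noteq> []"
  shows "gen (if gen c (ins_idx i y l) ! i = 1 then \<not> c else c) l = drop_idx i (gen c (ins_idx i y l))"
proof -
  define x where "x = ins_idx i y l"
  define a :: int where "a = (if y > 1/2 then 1 else -1)"
  define s where "s = csa_signs l"
  define S where "S = csa_signs x"
  define J where "J = csa_jstar x"
  have S: "S = ins_idx i a s" unfolding S_def s_def x_def a_def csa_signs_def by (simp add: map_ins)
  have lens: "length s = length l" unfolding s_def csa_signs_def by simp
  have Si: "S ! i = a" using il lens by (simp add: S nth_ins)
  have pm: "s ! k = 1 \<or> s ! k = -1" if "k < length s" for k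
    using that unfolding s_def csa_signs_def by auto
  have nS: "num_ones S = num_ones s + (if a = 1 then 1 else 0)" by (simp add: S num_ones_ins)
  have dS: "drop_idx i S = s" using il lens by (simp add: S drop_ins)
  have flip: "csa_flip x = S[J := - (S ! J)]" unfolding csa_flip_def S_def J_def by (simp add: Let_def)
  have xne: "x \<noteq> []" using il unfolding x_def by (metis len_ins list.size(3) nat.distinct(1))
  have Jl: "J < Suc (length l)" using jstar_props(1)[OF xne] il unfolding J_def x_def by simp
  have a1: "a = 1 \<or> a = -1" unfolding a_def by auto
  have gl: "gen c' l = (if even (num_ones s) = c' then csa_flip l else s)" for c'
    unfolding gen_def s_def by simp
  show ?thesis
  proof (cases "even (num_ones S) = c")
    case False
    then have g: "gen c x = S" unfolding gen_def S_def by simp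
    then have gi: "gen c x ! i = a" using Si by simp
    show ?thesis using a1
    proof
      assume a: "a = 1"
      have "\<not> (even (num_ones s) = (\<not> c))" using False nS a by (cases c) auto
      then show ?thesis using gi a g dS unfolding x_def[symmetric] gl by simp
    next
      assume a: "a = -1"
      have "\<not> (even (num_ones s) = c)" using False nS a by (cases c) auto
      then show ?thesis using gi a g dS unfolding x_def[symmetric] gl by simp
    qed
  next
    case True
    then have g: "gen c x = S[J := - (S ! J)]" unfolding gen_def S_def flip by simp
    show ?thesis
    proof (cases "J = i")
      case Ji: True
      have d: "drop_idx i (gen c x) = s" using g Ji dS
        by (simp add: drop_upd_same)
      have gi: "gen c x ! i = - a" using g Ji Si il lens S by simp
      show ?thesis using a1
      proof
        assume a: "a = 1"
        have "\<not> (even (num_ones s) = c)" using True nS a by (cases c) auto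
        then show ?thesis using gi a d unfolding x_def[symmetric] gl by simp
      next
        assume a: "a = -1"
        have "\<not> (even (num_ones s) = (\<not> c))" using True nS a by (cases c) auto
        then show ?thesis using gi a d unfolding x_def[symmetric] gl by simp
      qed
    next
      case Jn: False
      define j where "j = (if J < i then J else J - 1)"
      have jJ: "csa_jstar l = j" using jstar_ins[OF il ne] Jn unfolding j_def J_def x_def by simp
      have SJ: "S ! J = s ! j" using Jl Jn il lens unfolding S j_def by (auto simp: nth_ins)
      have up: "S[J := - (S ! J)] = ins_idx i a (s[j := - (s ! j)])"
      proof -
        have "(ins_idx i a s)[J := v] = ins_idx i a (s[j := v])" for v
          unfolding j_def by (rule ins_upd) (use il lens Jl Jn in auto)
        then show ?thesis using SJ unfolding S by simp
      qed
      have gi: "gen c x ! i = a" using g Jn Si by simp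
      have d: "drop_idx i (gen c x) = s[j := - (s ! j)]" using g up il lens by (simp add: drop_ins)
      have fl: "csa_flip l = s[j := - (s ! j)]" unfolding csa_flip_def s_def jJ by (simp add: Let_def)
      show ?thesis using a1
      proof
        assume a: "a = 1"
        have "even (num_ones s) = (\<not> c)" using True nS a by (cases c) auto
        then show ?thesis using gi a d fl unfolding x_def[symmetric] gl by simp
      next
        assume a: "a = -1"
        have "even (num_ones s) = c" using True nS a by (cases c) auto
        then show ?thesis using gi a d fl unfolding x_def[symmetric] gl by simp
      qed
    qed
  qed
qed


lemma length_gen: "length (gen c u) = length u"
  unfolding gen_def csa_flip_def csa_signs_def by (simp add: Let_def)

theorem theorem6:
  fixes d i :: nat and xt :: "real list" and y :: real
  assumes "d \<ge> 2" and "length xt = d - 1" and "i < d"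
  shows "(\<forall>\<theta> p. csa_even (ins_idx i y xt) = (\<theta>, p) \<and> \<theta> ! i = 1
              \<longrightarrow> csa_odd xt = (drop_idx i \<theta>, p - 1))
       \<and> (\<forall>\<theta> p. csa_odd (ins_idx i y xt) = (\<theta>, p) \<and> \<theta> ! i = 1
              \<longrightarrow> csa_even xt = (drop_idx i \<theta>, p - 1))
       \<and> (\<forall>\<theta> p. csa_even (ins_idx i y xt) = (\<theta>, p) \<and> \<theta> ! i = -1
              \<longrightarrow> csa_even xt = (drop_idx i \<theta>, p))
       \<and> (\<forall>\<theta> p. csa_odd (ins_idx i y xt) = (\<theta>, p) \<and> \<theta> ! i = -1
              \<longrightarrow> csa_odd xt = (drop_idx i \<theta>, p))"
proof -
  have il: "i \<le> length xt" using assms by simp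
  have ne: "xt \<noteq> []" using assms by auto
  have li: "i < length (gen c (ins_idx i y xt))" for c using il by (simp add: length_gen)
  note K = key[OF il ne]
  note N = num_ones_drop[OF li]
  show ?thesis
  proof (intro conjI allI impI; elim conjE)
    fix \<theta> p assume h: "csa_even (ins_idx i y xt) = (\<theta>, p)" "\<theta> ! i = 1"
    then have t: "\<theta> = gen True (ins_idx i y xt)" "p = int (num_ones \<theta>) - 1" by (auto simp: even_gen)
    show "csa_odd xt = (drop_idx i \<theta>, p - 1)"
      using K[where c=True and y=y] N[of True] h(2) t by (simp add: odd_gen)
  next
    fix \<theta> p assume h: "csa_odd (ins_idx i y xt) = (\<theta>, p)" "\<theta> ! i = 1"
    then have t: "\<theta> = gen False (ins_idx i y xt)" "p = int (num_ones \<theta>) - 1" by (auto simp: odd_gen)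
    show "csa_even xt = (drop_idx i \<theta>, p - 1)"
      using K[where c=False and y=y] N[of False] h(2) t by (simp add: even_gen)
  next
    fix \<theta> p assume h: "csa_even (ins_idx i y xt) = (\<theta>, p)" "\<theta> ! i = -1"
    then have t: "\<theta> = gen True (ins_idx i y xt)" "p = int (num_ones \<theta>) - 1" by (auto simp: even_gen)
    show "csa_even xt = (drop_idx i \<theta>, p)"
      using K[where c=True and y=y] N[of True] h(2) t by (simp add: even_gen)
  next
    fix \<theta> p assume h: "csa_odd (ins_idx i y xt) = (\<theta>, p)" "\<theta> ! i = -1"
    then have t: "\<theta> = gen False (ins_idx i y xt)" "p = int (num_ones \<theta>) - 1" by (auto simp: odd_gen)
    show "csa_odd xt = (drop_idx i \<theta>, p)"
      using K[where c=False and y=y] N[of False] h(2) t by (simp add: odd_gen)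
  qed
qed

end
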